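(* Consider the distributed detection model in the context with $\alpha\le 0.5$. For $(P_{1,0},P_{0,1})\in[0,1]^2$ with $\alpha(P_{1,0}+P_{0,1})<1$, let $$T(P_{1,0},P_{0,1})=\frac{\ln\left[\frac{P_0}{P_1}\left(\frac{1-\pi_{1,0}}{1-\pi_{1,1}}\right)^{N}\right]}{\ln\left[\frac{\pi_{1,1}(1-\pi_{1,0})}{\pi_{1,0}(1-\pi_{1,1})}\right]},$$ and let $\Phi(P_{1,0},P_{0,1})$ denote the error probability $P_E$ of the $K$-out-of-$N$ fusion rule with $K=\lceil T(P_{1,0},P_{0,1})\rceil$. Then $\Phi$ is a monotonically increasing function of $P_{1,0}$ when $P_{0,1}$ is held fixed, and a monotonically increasing function of $P_{0,1}$ when $P_{1,0}$ is held fixed.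
   Context: Binary hypothesis test between $H_0$ and $H_1$ with priors $P_0,P_1\in(0,1)$, $P_0+P_1=1$. There are $N$ sensors, each using the same fixed local threshold, so that conditionally on the hypothesis their local decisions $v_i\in\{0,1\}$ are i.i.d. with $P(v_i=1\mid H_1)=P_d$, $P(v_i=1\mid H_0)=P_f$, where $0<P_f<P_d<1$. Each sensor independently is Byzantine with probability $\alpha\in[0,1]$. Honest nodes send $u_i=v_i$; a Byzantine node sends $u_i=1$ with probability $P_{1,0}$ when $v_i=0$ and sends $u_i=0$ with probability $P_{0,1}$ when $v_i=1$. Hence conditionally on $H_j$ the $u_i$ are i.i.d. with $P(u_i=1\mid H_0)=\pi_{1,0}=\alpha(P_{1,0}(1-P_f)+(1-P_{0,1})P_f)+(1-\alpha)P_f$ and $P(u_i=1\mid H_1)=\pi_{1,1}=\alpha(P_{1,0}(1-P_d)+(1-P_{0,1})P_d)+(1-\alpha)P_d$. A $K$-out-of-$N$ fusion rule decides $H_1$ iff at least $K$ of the $u_i$ equal $1$; its error probability is $P_E=P_0Q_F+P_1(1-Q_D)$ with $Q_F=\sum_{i=K}^N\binom{N}{i}\pi_{1,0}^i(1-\pi_{1,0})^{N-i}$ and $Q_D=\sum_{i=K}^N\binom{N}{i}\pi_{1,1}^i(1-\pi_{1,1})^{N-i}$. The rule with $K=\lceil T\rceil$ is the optimal (MAP) fusion rule when $\alpha(P_{1,0}+P_{0,1})<1$. *)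

theory Defs
  imports Complex_Main
begin

text \<open>Probability that a transmitted decision equals 1 under H0 (pi_{1,0}) and under H1 (pi_{1,1}).\<close>
definition pi10 :: "real \<Rightarrow> real \<Rightarrow> real \<Rightarrow> real \<Rightarrow> real" where
  "pi10 \<alpha> Pf P10 P01 = \<alpha> * (P10 * (1 - Pf) + (1 - P01) * Pf) + (1 - \<alpha>) * Pf"

definition pi11 :: "real \<Rightarrow> real \<Rightarrow> real \<Rightarrow> real \<Rightarrow> real" where
  "pi11 \<alpha> Pd P10 P01 = \<alpha> * (P10 * (1 - Pd) + (1 - P01) * Pd) + (1 - \<alpha>) * Pd"

definition thrT :: "nat \<Rightarrow> real \<Rightarrow> real \<Rightarrow> real \<Rightarrow> real \<Rightarrow> real \<Rightarrow> real \<Rightarrow> real" where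
  "thrT N P0 \<alpha> Pd Pf P10 P01 =
     (let a = pi10 \<alpha> Pf P10 P01; b = pi11 \<alpha> Pd P10 P01 in
      ln ((P0 / (1 - P0)) * ((1 - a) / (1 - b)) ^ N) / ln ((b * (1 - a)) / (a * (1 - b))))"

definition tail_prob :: "nat \<Rightarrow> int \<Rightarrow> real \<Rightarrow> real" where
  "tail_prob N K p = (\<Sum>i\<in>{i. K \<le> int i \<and> i \<le> N}. real (N choose i) * p ^ i * (1 - p) ^ (N - i))"

definition PE :: "nat \<Rightarrow> int \<Rightarrow> real \<Rightarrow> real \<Rightarrow> real \<Rightarrow> real \<Rightarrow> real \<Rightarrow> real \<Rightarrow> real" where
  "PE N K P0 \<alpha> Pd Pf P10 P01 =
     P0 * tail_prob N K (pi10 \<alpha> Pf P10 P01) + (1 - P0) * (1 - tail_prob N K (pi11 \<alpha> Pd P10 P01))"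

definition Phi :: "nat \<Rightarrow> real \<Rightarrow> real \<Rightarrow> real \<Rightarrow> real \<Rightarrow> real \<Rightarrow> real \<Rightarrow> real" where
  "Phi N P0 \<alpha> Pd Pf P10 P01 =
     PE N \<lceil>thrT N P0 \<alpha> Pd Pf P10 P01\<rceil> P0 \<alpha> Pd Pf P10 P01"

end

theory Submission imports Defs "HOL-Computational_Algebra.Polynomial" begin

definition Bk :: "nat \<Rightarrow> real \<Rightarrow> nat \<Rightarrow> real" where
  "Bk N p k = real (N choose k) * p ^ k * (1 - p) ^ (N - k)"

definition RR :: "nat \<Rightarrow> real \<Rightarrow> real \<Rightarrow> real \<Rightarrow> real" where
  "RR N P0 a b = (\<Sum>k\<le>N. min (P0 * Bk N a k) ((1 - P0) * Bk N b k))"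

lemma Bk_total: "(\<Sum>k\<le>N. Bk N p k) = 1"
  using binomial_ring[of p "1 - p" N] by (simp add: Bk_def)

lemma tail_sum: "tail_prob N K p = (\<Sum>k\<le>N. if K \<le> int k then Bk N p k else 0)"
proof -
  have "{i. K \<le> int i \<and> i \<le> N} = {k\<in>{..N}. K \<le> int k}" by auto
  then show ?thesis unfolding tail_prob_def Bk_def
    by (simp add: sum.inter_filter[symmetric])
qed

lemma PE_sum:
  "PE N K P0 \<alpha> Pd Pf P10 P01 =
    (\<Sum>k\<le>N. if K \<le> int k then P0 * Bk N (pi10 \<alpha> Pf P10 P01) k
             else (1 - P0) * Bk N (pi11 \<alpha> Pd P10 P01) k)"
proof -
  let ?a = "pi10 \<alpha> Pf P10 P01" and ?b = "pi11 \<alpha> Pd P10 P01"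
  have "1 - tail_prob N K ?b = (\<Sum>k\<le>N. Bk N ?b k) - (\<Sum>k\<le>N. if K \<le> int k then Bk N ?b k else 0)"
    by (simp add: Bk_total tail_sum)
  also have "\<dots> = (\<Sum>k\<le>N. if K \<le> int k then 0 else Bk N ?b k)"
    unfolding sum_subtractf[symmetric] by (rule sum.cong) auto
  finally have 1: "1 - tail_prob N K ?b = \<dots>" .
  show ?thesis unfolding PE_def 1 unfolding tail_sum
    by (auto simp add: sum_distrib_left sum.distrib[symmetric] intro!: sum.cong)
qed

lemma PE_ge: "RR N P0 (pi10 \<alpha> Pf P10 P01) (pi11 \<alpha> Pd P10 P01) \<le> PE N K P0 \<alpha> Pd Pf P10 P01"
  unfolding PE_sum RR_def by (rule sum_mono) auto

lemma MAP_term: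
  fixes P0 a b :: real
  assumes "0 < P0" "P0 < 1" "0 < a" "a < b" "b < 1" "k \<le> N"
  defines "T \<equiv> ln ((P0 / (1 - P0)) * ((1 - a) / (1 - b)) ^ N) / ln ((b * (1 - a)) / (a * (1 - b)))"
  shows "(if \<lceil>T\<rceil> \<le> int k then P0 * Bk N a k else (1 - P0) * Bk N b k)
         = min (P0 * Bk N a k) ((1 - P0) * Bk N b k)"
proof -
  define X where "X = P0 * a ^ k * (1 - a) ^ (N - k)"
  define Y where "Y = (1 - P0) * b ^ k * (1 - b) ^ (N - k)"
  define L where "L = ln ((b * (1 - a)) / (a * (1 - b)))"
  have a1: "0 < 1 - a" and b1: "0 < 1 - b" and b0: "0 < b" using assms by auto
  have Xp: "X > 0" unfolding X_def using assms a1 by auto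
  have Yp: "Y > 0" unfolding Y_def using assms b1 b0 by auto
  have "b * (1 - a) > a * (1 - b)" using assms by (simp add: algebra_simps)
  then have "(b * (1 - a)) / (a * (1 - b)) > 1" using assms a1 b1 by (simp add: field_simps)
  then have Lp: "L > 0" unfolding L_def by simp
  have kN: "real (N - k) = real N - real k" using assms by simp
  have lnX: "ln X = ln P0 + k * ln a + (real N - k) * ln (1 - a)"
    unfolding X_def using assms a1 by (simp add: ln_mult ln_realpow kN)
  have lnY: "ln Y = ln (1 - P0) + k * ln b + (real N - k) * ln (1 - b)"
    unfolding Y_def using assms b1 b0 by (simp add: ln_mult ln_realpow kN)
  have L_eq: "L = ln b + ln (1 - a) - ln a - ln (1 - b)"
    unfolding L_def using assms a1 b1 b0 by (simp add: ln_mult ln_div)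
  have num: "ln ((P0 / (1 - P0)) * ((1 - a) / (1 - b)) ^ N) = ln P0 - ln (1 - P0) + N * (ln (1 - a) - ln (1 - b))"
    using assms a1 b1 by (simp add: ln_mult ln_div ln_realpow)
  have TL: "T * L = ln P0 - ln (1 - P0) + N * (ln (1 - a) - ln (1 - b))"
    unfolding T_def L_def[symmetric] num using Lp by simp
  have kL: "k * L = k * ln b + k * ln (1 - a) - k * ln a - k * ln (1 - b)"
    unfolding L_eq by (simp add: algebra_simps)
  have NN: "(real N - k) * ln (1 - a) = N * ln (1 - a) - k * ln (1 - a)"
     "(real N - k) * ln (1 - b) = N * ln (1 - b) - k * ln (1 - b)"
    "real N * (ln (1 - a) - ln (1 - b)) = N * ln (1 - a) - N * ln (1 - b)"
    by (simp_all add: algebra_simps)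
  have key: "ln Y - ln X = (k - T) * L"
    unfolding left_diff_distrib using lnX lnY kL TL NN by linarith
  have BX: "P0 * Bk N a k = real (N choose k) * X" unfolding Bk_def X_def by simp
  have BY: "(1 - P0) * Bk N b k = real (N choose k) * Y" unfolding Bk_def Y_def by simp
  show ?thesis
  proof (cases "\<lceil>T\<rceil> \<le> int k")
    case True
    then have "T \<le> k" by (simp add: ceiling_le_iff)
    then have "ln Y - ln X \<ge> 0" unfolding key using Lp by simp
    then have "X \<le> Y" using Xp Yp by simp
    then have "P0 * Bk N a k \<le> (1 - P0) * Bk N b k" unfolding BX BY by (simp add: mult_left_mono)
    then show ?thesis using True by simp
  next
    case False
    then have "T > k" by (simp add: ceiling_le_iff)
    then have "ln Y - ln X \<le> 0" unfolding key using Lp by (simp add: mult_nonpos_nonneg)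
    then have "Y \<le> X" using Xp Yp by simp
    then have "(1 - P0) * Bk N b k \<le> P0 * Bk N a k" unfolding BX BY by (simp add: mult_left_mono)
    then show ?thesis using False by simp
  qed
qed

definition nnc :: "real poly \<Rightarrow> bool" where "nnc p = (\<forall>i. coeff p i \<ge> 0)"

lemma nnc_mult: "nnc p \<Longrightarrow> nnc q \<Longrightarrow> nnc (p * q)"
  unfolding nnc_def coeff_mult by (auto intro!: sum_nonneg)

lemma nnc_power: "nnc p \<Longrightarrow> nnc (p ^ n)"
  by (induction n) (auto intro: nnc_mult simp: nnc_def[of 1])

lemma nnc_lin: "0 \<le> x \<Longrightarrow> 0 \<le> y \<Longrightarrow> nnc [:x, y:]"
  unfolding nnc_def by (auto simp: coeff_pCons split: nat.split)

lemma degree_lin_le: "degree [:x, y::real:] \<le> 1"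
  by (simp add: degree_pCons_le)

lemma garble:
  fixes t m a b P0 :: real
  assumes "0 \<le> t" "0 \<le> m" "t + m \<le> 1"
  shows "RR N P0 a b \<le> RR N P0 (t + m * a) (t + m * b)"
proof -
  define q1 :: "real poly" where "q1 = [:1 - (t + m), t + m:]"
  define q0 :: "real poly" where "q0 = [:1 - t, t:]"
  define W where "W k j = coeff (q1 ^ k * q0 ^ (N - k)) j" for k j
  have "nnc q1" "nnc q0" unfolding q1_def q0_def using assms by (auto intro: nnc_lin)
  then have "nnc (q1 ^ k * q0 ^ (N - k))" for k by (intro nnc_mult nnc_power)
  then have Wnn: "W k j \<ge> 0" for k j
    unfolding W_def nnc_def by blast
  have Wsum: "(\<Sum>j\<le>N. W k j) = 1" if "k \<le> N" for k
  proof -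
    let ?p = "q1 ^ k * q0 ^ (N - k)"
    have "degree ?p \<le> degree (q1 ^ k) + degree (q0 ^ (N - k))" by (rule degree_mult_le)
    also have "\<dots> \<le> degree q1 * k + degree q0 * (N - k)"
      using degree_power_le[of q1 k] degree_power_le[of q0 "N - k"] by linarith
    also have "\<dots> \<le> 1 * k + 1 * (N - k)"
      using degree_lin_le unfolding q1_def q0_def by (intro add_mono mult_right_mono) auto
    finally have dg: "degree ?p \<le> N" using that by simp
    have "poly ?p 1 = 1" unfolding q1_def q0_def by simp
    moreover have "poly ?p 1 = (\<Sum>i\<le>degree ?p. coeff ?p i)" by (simp add: poly_altdef)
    moreover have "(\<Sum>i\<le>degree ?p. coeff ?p i) = (\<Sum>i\<le>N. coeff ?p i)"
      using dg by (intro sum.mono_neutral_left) (auto simp: coeff_eq_0)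
    ultimately show ?thesis unfolding W_def by simp
  qed
  have Wmix: "(\<Sum>k\<le>N. W k j * Bk N c k) = Bk N (t + m * c) j" if "j \<le> N" for j c
  proof -
    have lin: "smult c q1 + smult (1 - c) q0 = [:1 - (t + m * c), t + m * c:]"
    proof -
      have "c * (1 - (t + m)) + (1 - c) * (1 - t) = 1 - (t + m * c)"
           "c * (t + m) + (1 - c) * t = t + m * c" by (simp_all add: algebra_simps)
      then show ?thesis unfolding q1_def q0_def by simp
    qed
    have "(\<Sum>k\<le>N. smult (Bk N c k) (q1 ^ k * q0 ^ (N - k)))
        = (\<Sum>k\<le>N. of_nat (N choose k) * (smult c q1) ^ k * (smult (1 - c) q0) ^ (N - k))"
      unfolding Bk_def smult_power of_nat_mult_conv_smult
      by (intro sum.cong refl) (simp add: mult_smult_left mult_smult_right mult.assoc, simp add: mult_ac)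
    also have "\<dots> = (smult c q1 + smult (1 - c) q0) ^ N"
      by (rule binomial_ring[symmetric])
    finally have "(\<Sum>k\<le>N. smult (Bk N c k) (q1 ^ k * q0 ^ (N - k))) = [:1 - (t + m * c), t + m * c:] ^ N"
      unfolding lin .
    then have "coeff (\<Sum>k\<le>N. smult (Bk N c k) (q1 ^ k * q0 ^ (N - k))) j = coeff ([:1 - (t + m * c), t + m * c:] ^ N) j"
      by simp
    then show ?thesis unfolding coeff_sum coeff_smult coeff_linear_poly_power[OF that] W_def Bk_def
      by (simp add: mult_ac)
  qed
  let ?a = "t + m * a" and ?b = "t + m * b"
  have "RR N P0 a b = (\<Sum>k\<le>N. (\<Sum>j\<le>N. W k j) * min (P0 * Bk N a k) ((1 - P0) * Bk N b k))"
    unfolding RR_def by (intro sum.cong) (auto simp: Wsum)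
  also have "\<dots> = (\<Sum>j\<le>N. \<Sum>k\<le>N. W k j * min (P0 * Bk N a k) ((1 - P0) * Bk N b k))"
    unfolding sum_distrib_right by (rule sum.swap)
  also have "\<dots> \<le> (\<Sum>j\<le>N. min (\<Sum>k\<le>N. W k j * (P0 * Bk N a k)) (\<Sum>k\<le>N. W k j * ((1 - P0) * Bk N b k)))"
    by (intro sum_mono min.boundedI; intro sum_mono mult_left_mono; auto simp: Wnn)
  also have "\<dots> = RR N P0 ?a ?b"
    unfolding RR_def
  proof (intro sum.cong refl)
    fix j assume "j \<in> {..N}"
    then have j: "j \<le> N" by simp
    have e1: "(\<Sum>k\<le>N. W k j * (P0 * Bk N a k)) = P0 * Bk N ?a j"
      unfolding Wmix[OF j, of a, symmetric] by (simp add: sum_distrib_left mult_ac)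
    have e2: "(\<Sum>k\<le>N. W k j * ((1 - P0) * Bk N b k)) = (1 - P0) * Bk N ?b j"
      unfolding Wmix[OF j, of b, symmetric] by (simp add: sum_distrib_left mult_ac)
    show "min (\<Sum>k\<le>N. W k j * (P0 * Bk N a k)) (\<Sum>k\<le>N. W k j * ((1 - P0) * Bk N b k))
       = min (P0 * Bk N ?a j) ((1 - P0) * Bk N ?b j)" unfolding e1 e2 ..
  qed
  finally show ?thesis .
qed

lemma pi10_alt: "pi10 \<alpha> Pf P10 P01 = \<alpha> * P10 + Pf * (1 - \<alpha> * P10 - \<alpha> * P01)"
  unfolding pi10_def by (simp add: algebra_simps)
lemma pi11_alt: "pi11 \<alpha> Pd P10 P01 = \<alpha> * P10 + Pd * (1 - \<alpha> * P10 - \<alpha> * P01)"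
  unfolding pi11_def by (simp add: algebra_simps)

lemma Phi_eq_RR:
  assumes "0 < P0" "P0 < 1" "0 < pi10 \<alpha> Pf P10 P01" "pi10 \<alpha> Pf P10 P01 < pi11 \<alpha> Pd P10 P01"
    "pi11 \<alpha> Pd P10 P01 < 1"
  shows "Phi N P0 \<alpha> Pd Pf P10 P01 = RR N P0 (pi10 \<alpha> Pf P10 P01) (pi11 \<alpha> Pd P10 P01)"
  unfolding Phi_def PE_sum RR_def thrT_def Let_def
  by (intro sum.cong refl MAP_term) (use assms in auto)

lemma Phi_step:
  assumes "0 < P0" "P0 < 1" "0 < pi10 \<alpha> Pf P10 P01" "pi10 \<alpha> Pf P10 P01 < pi11 \<alpha> Pd P10 P01"
    "pi11 \<alpha> Pd P10 P01 < 1" "0 \<le> t" "0 \<le> m" "t + m \<le> 1"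
    "pi10 \<alpha> Pf Q10 Q01 = t + m * pi10 \<alpha> Pf P10 P01"
    "pi11 \<alpha> Pd Q10 Q01 = t + m * pi11 \<alpha> Pd P10 P01"
  shows "Phi N P0 \<alpha> Pd Pf P10 P01 \<le> Phi N P0 \<alpha> Pd Pf Q10 Q01"
proof -
  have "Phi N P0 \<alpha> Pd Pf P10 P01 = RR N P0 (pi10 \<alpha> Pf P10 P01) (pi11 \<alpha> Pd P10 P01)"
    using assms by (intro Phi_eq_RR)
  also have "\<dots> \<le> RR N P0 (pi10 \<alpha> Pf Q10 Q01) (pi11 \<alpha> Pd Q10 Q01)"
    unfolding assms(9,10) using assms by (intro garble)
  also have "\<dots> \<le> Phi N P0 \<alpha> Pd Pf Q10 Q01" unfolding Phi_def by (rule PE_ge)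
  finally show ?thesis .
qed

lemma pi_bounds:
  fixes c d x y :: real
  assumes "0 \<le> c" "0 \<le> d" "c + d < 1" "0 < x" "x < y" "y < 1"
  shows "0 < c + x * (1 - c - d)" "c + x * (1 - c - d) < c + y * (1 - c - d)" "c + y * (1 - c - d) < 1"
proof -
  have D: "0 < 1 - c - d" using assms by simp
  show "0 < c + x * (1 - c - d)" using assms D by (simp add: add_nonneg_pos)
  show "c + x * (1 - c - d) < c + y * (1 - c - d)" using assms D by simp
  have "0 < (1 - y) * (1 - c - d) + d" using assms D by (simp add: add_pos_nonneg)
  then show "c + y * (1 - c - d) < 1" by (simp add: algebra_simps)
qed

theorem lemma6:
  fixes N :: nat and P0 \<alpha> Pd Pf :: real
  assumes "0 < P0" "P0 < 1"
    and "0 < Pf" "Pf < Pd" "Pd < 1"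
    and "0 \<le> \<alpha>" "\<alpha> \<le> 1/2"
  shows "(\<forall>P10 P10' P01. 0 \<le> P10 \<and> P10 \<le> P10' \<and> P10' \<le> 1 \<and> 0 \<le> P01 \<and> P01 \<le> 1
             \<and> \<alpha> * (P10' + P01) < 1
             \<longrightarrow> Phi N P0 \<alpha> Pd Pf P10 P01 \<le> Phi N P0 \<alpha> Pd Pf P10' P01)
       \<and> (\<forall>P10 P01 P01'. 0 \<le> P10 \<and> P10 \<le> 1 \<and> 0 \<le> P01 \<and> P01 \<le> P01' \<and> P01' \<le> 1
             \<and> \<alpha> * (P10 + P01') < 1
             \<longrightarrow> Phi N P0 \<alpha> Pd Pf P10 P01 \<le> Phi N P0 \<alpha> Pd Pf P10 P01')"
proof (intro conjI allI impI)
  fix P10 P10' P01 :: real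
  assume h: "0 \<le> P10 \<and> P10 \<le> P10' \<and> P10' \<le> 1 \<and> 0 \<le> P01 \<and> P01 \<le> 1 \<and> \<alpha> * (P10' + P01) < 1"
  define c where "c = \<alpha> * P10"
  define c' where "c' = \<alpha> * P10'"
  define d where "d = \<alpha> * P01"
  have c0: "0 \<le> c" and cc: "c \<le> c'" and d0: "0 \<le> d"
    unfolding c_def c'_def d_def using h assms by (auto intro: mult_left_mono)
  have cd': "c' + d < 1" unfolding c'_def d_def using h by (simp add: distrib_left)
  define D where "D = 1 - c - d"
  define D' where "D' = 1 - c' - d"
  have Dp: "D > 0" and D'p: "D' > 0" unfolding D_def D'_def using cd' cc by auto
  define m where "m = D' / D"
  define t where "t = c' - c * m"
  have mD: "m * D = D'" unfolding m_def using Dp by simp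
  have m0: "0 \<le> m" unfolding m_def using Dp D'p by simp
  have tD: "t * D = c' * D - c * (m * D)" unfolding t_def by (simp add: algebra_simps)
  also have "\<dots> = (c' - c) * (1 - d)" unfolding mD unfolding D_def D'_def by (simp add: algebra_simps)
  finally have tD2: "t * D = (c' - c) * (1 - d)" .
  moreover have "(c' - c) * (1 - d) \<ge> 0" using cc cd' c0 by simp
  ultimately have t0: "0 \<le> t" using Dp by (metis zero_le_mult_iff not_less)
  have "(1 - t - m) * D = D - t * D - m * D" by (simp add: algebra_simps)
  also have "\<dots> = d * (c' - c)" unfolding tD2 mD unfolding D_def D'_def by (simp add: algebra_simps)
  finally have "(1 - t - m) * D = d * (c' - c)" .
  moreover have "d * (c' - c) \<ge> 0" using cc d0 by simp
  ultimately have "(1 - t - m) * D \<ge> 0" by simp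
  then have "1 - t - m \<ge> 0" using Dp by (simp add: zero_le_mult_iff)
  then have tm: "t + m \<le> 1" by simp
  have pt: "c + x * D = c + x * (1 - c - d)" for x unfolding D_def by simp
  have cdlt: "c + d < 1" using cd' cc by simp
  have bnds: "0 < pi10 \<alpha> Pf P10 P01" "pi10 \<alpha> Pf P10 P01 < pi11 \<alpha> Pd P10 P01" "pi11 \<alpha> Pd P10 P01 < 1"
    unfolding pi10_alt pi11_alt c_def[symmetric] d_def[symmetric]
    using pi_bounds[OF c0 d0 cdlt assms(3,4,5)] by simp_all
  have e: "c' + x * D' = t + m * (c + x * D)" for x
    unfolding t_def using mD by (simp add: algebra_simps)
  show "Phi N P0 \<alpha> Pd Pf P10 P01 \<le> Phi N P0 \<alpha> Pd Pf P10' P01"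
  proof (rule Phi_step[OF assms(1,2) bnds t0 m0 tm])
    show "pi10 \<alpha> Pf P10' P01 = t + m * pi10 \<alpha> Pf P10 P01"
      using e[of Pf] unfolding pi10_alt c_def c'_def d_def D_def D'_def by simp
    show "pi11 \<alpha> Pd P10' P01 = t + m * pi11 \<alpha> Pd P10 P01"
      using e[of Pd] unfolding pi11_alt c_def c'_def d_def D_def D'_def by simp
  qed
next
  fix P10 P01 P01' :: real
  assume h: "0 \<le> P10 \<and> P10 \<le> 1 \<and> 0 \<le> P01 \<and> P01 \<le> P01' \<and> P01' \<le> 1 \<and> \<alpha> * (P10 + P01') < 1"
  define c where "c = \<alpha> * P10"
  define d where "d = \<alpha> * P01"
  define d' where "d' = \<alpha> * P01'"
  have c0: "0 \<le> c" and dd: "d \<le> d'" and d0: "0 \<le> d"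
    unfolding c_def d'_def d_def using h assms by (auto intro: mult_left_mono)
  have cd': "c + d' < 1" unfolding c_def d'_def using h by (simp add: distrib_left)
  define D where "D = 1 - c - d"
  define D' where "D' = 1 - c - d'"
  have Dp: "D > 0" and D'p: "D' > 0" and DD: "D' \<le> D" unfolding D_def D'_def using cd' dd by auto
  define m where "m = D' / D"
  define t where "t = c * (1 - m)"
  have mD: "m * D = D'" unfolding m_def using Dp by simp
  have m0: "0 \<le> m" unfolding m_def using Dp D'p by simp
  have m1: "m \<le> 1" unfolding m_def using Dp DD by simp
  have c1: "c \<le> 1" using cd' d0 dd by simp
  have t0: "0 \<le> t" unfolding t_def using c0 m1 by simp
  have "1 - t - m = (1 - c) * (1 - m)" unfolding t_def by (simp add: algebra_simps)
  moreover have "(1 - c) * (1 - m) \<ge> 0" using c1 m1 by simp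
  ultimately have tm: "t + m \<le> 1" by simp
  have cdlt: "c + d < 1" using cd' dd by simp
  have bnds: "0 < pi10 \<alpha> Pf P10 P01" "pi10 \<alpha> Pf P10 P01 < pi11 \<alpha> Pd P10 P01" "pi11 \<alpha> Pd P10 P01 < 1"
    unfolding pi10_alt pi11_alt c_def[symmetric] d_def[symmetric]
    using pi_bounds[OF c0 d0 cdlt assms(3,4,5)] by simp_all
  have e: "c + x * D' = t + m * (c + x * D)" for x
    unfolding t_def using mD by (simp add: algebra_simps)
  show "Phi N P0 \<alpha> Pd Pf P10 P01 \<le> Phi N P0 \<alpha> Pd Pf P10 P01'"
  proof (rule Phi_step[OF assms(1,2) bnds t0 m0 tm])
    show "pi10 \<alpha> Pf P10 P01' = t + m * pi10 \<alpha> Pf P10 P01"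
      using e[of Pf] unfolding pi10_alt c_def d'_def d_def D_def D'_def by simp
    show "pi11 \<alpha> Pd P10 P01' = t + m * pi11 \<alpha> Pd P10 P01"
      using e[of Pd] unfolding pi11_alt c_def d'_def d_def D_def D'_def by simp
  qed
qed

end
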